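(* One has $w(\bar\alpha_0)=\frac12$, and for all $n\ge1$: $$w(\bar\alpha_n)=-\frac{3}{2^{n+1}(2n-1)!!},\qquad w(\bar Z_{n+1})=-\frac1{2^{n-1}(2n+1)!!}.$$
   Context: $\mathcal A$ is the free associative $\mathbb R$-algebra of noncommutative polynomials in symbols $N$ (degree 1) and $\Delta$ (degree 2). Each $A\in\mathcal A$ homogeneous of degree $\ge1$ is uniquely written $A=\bar AN+\tilde A\Delta$. The weight $w:\mathcal A\to\mathbb R$ is the algebra homomorphism with $w(I)=1$, $w(N)=2$, $w(\Delta)=-1$. Define $R_{kj},S_{kj}$ ($k,j$ integers): $R_{00}=I$, $S_{00}=0$, $R_{kj}=S_{kj}=0$ if $k<0$ or $j<0$, otherwise $R_{kj}=-(N^2+\Delta)R_{k-1,j}+NS_{k-1,j}$, $S_{kj}=\Delta NR_{k-1,j}-\Delta S_{k-1,j}+NR_{k-1,j-1}$. Let $\{a,b\}=\frac{\Gamma(a+b+\frac12)}{(a+b)!\Gamma(a+\frac12)}$, $Z_{n+1}=\sum_{j=0}^n\{n+1,j-1\}R_{n+j,j}$ and $\alpha_n=\sum_{j=0}^{n+1}\{n,j\}S_{n+j,j}$. *)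

theory Defs
  imports "HOL-Analysis.Analysis"
begin

text \<open>Free associative R-algebra on N (degree 1) and Delta (degree 2): elements are
  real coefficient functions on words (finite support for all elements considered).\<close>

datatype letter = LN | LD

type_synonym ncpoly = "letter list \<Rightarrow> real"

definition pzero :: ncpoly where "pzero = (\<lambda>w. 0)"
definition pone :: ncpoly where "pone = (\<lambda>w. if w = [] then 1 else 0)"
definition pN :: ncpoly where "pN = (\<lambda>w. if w = [LN] then 1 else 0)"
definition pD :: ncpoly where "pD = (\<lambda>w. if w = [LD] then 1 else 0)"
definition padd :: "ncpoly \<Rightarrow> ncpoly \<Rightarrow> ncpoly" where "padd A B = (\<lambda>w. A w + B w)"
definition psub :: "ncpoly \<Rightarrow> ncpoly \<Rightarrow> ncpoly" where "psub A B = (\<lambda>w. A w - B w)"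
definition psmult :: "real \<Rightarrow> ncpoly \<Rightarrow> ncpoly" where "psmult c A = (\<lambda>w. c * A w)"
definition pmul :: "ncpoly \<Rightarrow> ncpoly \<Rightarrow> ncpoly" where
  "pmul A B = (\<lambda>w. \<Sum>i\<le>length w. A (take i w) * B (drop i w))"

definition weight_word :: "letter list \<Rightarrow> real" where
  "weight_word w = 2 ^ length (filter (\<lambda>x. x = LN) w) * (-1) ^ length (filter (\<lambda>x. x = LD) w)"
definition weight :: "ncpoly \<Rightarrow> real" where
  "weight A = (\<Sum>w\<in>{w. A w \<noteq> 0}. A w * weight_word w)"

text \<open>A = bar A * N + tilde A * Delta; bar A collects the words ending in N.\<close>
definition pbar :: "ncpoly \<Rightarrow> ncpoly" where "pbar A = (\<lambda>w. A (w @ [LN]))"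

fun RS :: "nat \<Rightarrow> int \<Rightarrow> ncpoly \<times> ncpoly" where
  "RS 0 j = ((if j = 0 then pone else pzero), pzero)"
| "RS (Suc k) j =
     (if j < 0 then (pzero, pzero) else
      (padd (psmult (-1) (pmul (padd (pmul pN pN) pD) (fst (RS k j)))) (pmul pN (snd (RS k j))),
       padd (psub (pmul (pmul pD pN) (fst (RS k j))) (pmul pD (snd (RS k j))))
            (pmul pN (fst (RS k (j - 1))))))"

definition R :: "int \<Rightarrow> int \<Rightarrow> ncpoly" where
  "R k j = (if k < 0 \<or> j < 0 then pzero else fst (RS (nat k) j))"
definition S :: "int \<Rightarrow> int \<Rightarrow> ncpoly" where
  "S k j = (if k < 0 \<or> j < 0 then pzero else snd (RS (nat k) j))"

definition brace :: "int \<Rightarrow> int \<Rightarrow> real" where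
  "brace a b = Gamma (of_int (a + b) + 1/2) / (fact (nat (a + b)) * Gamma (of_int a + 1/2))"

text \<open>Zp n = Z_{n+1}.\<close>
definition Zp :: "nat \<Rightarrow> ncpoly" where
  "Zp n = (\<lambda>w. \<Sum>j\<in>{0..n}. brace (int n + 1) (int j - 1) * R (int n + int j) (int j) w)"
definition alpha :: "nat \<Rightarrow> ncpoly" where
  "alpha n = (\<lambda>w. \<Sum>j\<in>{0..n+1}. brace (int n) (int j) * S (int n + int j) (int j) w)"

fun dfact :: "nat \<Rightarrow> nat" where
  "dfact 0 = 1" | "dfact (Suc 0) = 1" | "dfact (Suc (Suc n)) = Suc (Suc n) * dfact n"

end

theory Submission
  imports Defs "HOL-Computational_Algebra.Polynomial"
begin


definition pmono :: "letter list \<Rightarrow> ncpoly" where "pmono u = (\<lambda>w. if w = u then 1 else 0)"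
definition pre :: "letter list \<Rightarrow> ncpoly \<Rightarrow> ncpoly" where
  "pre u A = (\<lambda>w. if take (length u) w = u then A (drop (length u) w) else 0)"
definition fin :: "ncpoly \<Rightarrow> bool" where "fin A = finite {w. A w \<noteq> 0}"

lemma pmul_mono: "pmul (pmono u) A = pre u A"
proof (rule ext)
  fix w
  have "pmul (pmono u) A w = (\<Sum>i\<le>length w. if i = length u then (if take (length u) w = u then A (drop (length u) w) else 0) else 0)"
    unfolding pmul_def pmono_def
    by (rule sum.cong) (auto simp: min_def split: if_splits)
  also have "\<dots> = pre u A w"
    unfolding pre_def by (auto simp: min_def dest: arg_cong[of _ _ length])
  finally show "pmul (pmono u) A w = pre u A w" .
qed

lemma pN_mono: "pN = pmono [LN]" and pD_mono: "pD = pmono [LD]" and pone_mono: "pone = pmono []"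
  by (auto simp: pN_def pD_def pone_def pmono_def)

lemma pre_mono: "pre u (pmono v) = pmono (u @ v)"
  unfolding pre_def pmono_def
  by (rule ext) (auto dest: arg_cong[of _ _ length], metis append_take_drop_id)

lemma pmul_padd_left: "pmul (padd X Y) A = padd (pmul X A) (pmul Y A)"
  unfolding pmul_def padd_def by (rule ext) (simp add: algebra_simps sum.distrib)

lemma fin_mono: "fin (pmono u)" unfolding fin_def pmono_def by (rule finite_subset[of _ "{u}"]) auto
lemma fin_pzero: "fin pzero" unfolding fin_def pzero_def by simp
lemma fin_padd: "fin A \<Longrightarrow> fin B \<Longrightarrow> fin (padd A B)"
  unfolding fin_def padd_def by (rule finite_subset[of _ "{w. A w \<noteq> 0} \<union> {w. B w \<noteq> 0}"]) auto
lemma fin_psub: "fin A \<Longrightarrow> fin B \<Longrightarrow> fin (psub A B)"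
  unfolding fin_def psub_def by (rule finite_subset[of _ "{w. A w \<noteq> 0} \<union> {w. B w \<noteq> 0}"]) auto
lemma fin_psmult: "fin A \<Longrightarrow> fin (psmult c A)"
  unfolding fin_def psmult_def by (rule finite_subset[of _ "{w. A w \<noteq> 0}"]) auto
lemma supp_pre: "{w. pre u A w \<noteq> 0} = (\<lambda>v. u @ v) ` {w. A w \<noteq> 0}"
  unfolding pre_def
  apply (auto simp: image_iff)
  by (metis append_take_drop_id)
lemma fin_pre: "fin A \<Longrightarrow> fin (pre u A)"
  unfolding fin_def supp_pre by simp
lemma fin_pbar: "fin A \<Longrightarrow> fin (pbar A)"
  unfolding fin_def pbar_def
  by (rule finite_subset[of _ "butlast ` {w. A w \<noteq> 0}"]) (auto simp: image_iff, metis butlast_snoc)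

lemma weight_superset: "finite W \<Longrightarrow> {w. A w \<noteq> 0} \<subseteq> W \<Longrightarrow> weight A = (\<Sum>w\<in>W. A w * weight_word w)"
  unfolding weight_def by (rule sum.mono_neutral_left) auto

lemma weight_sum: assumes "finite J" "\<And>j. j \<in> J \<Longrightarrow> fin (f j)"
  shows "weight (\<lambda>w. \<Sum>j\<in>J. c j * f j w) = (\<Sum>j\<in>J. c j * weight (f j))"
proof -
  define W where "W = (\<Union>j\<in>J. {w. f j w \<noteq> 0})"
  have fW: "finite W" using assms unfolding W_def fin_def by auto
  have "weight (\<lambda>w. \<Sum>j\<in>J. c j * f j w) = (\<Sum>w\<in>W. (\<Sum>j\<in>J. c j * f j w) * weight_word w)"
    apply (rule weight_superset[OF fW])
    unfolding W_def using sum.neutral by force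
  also have "\<dots> = (\<Sum>j\<in>J. c j * (\<Sum>w\<in>W. f j w * weight_word w))"
    by (simp add: sum_distrib_left sum_distrib_right sum.swap[of _ W] mult.assoc)
  also have "\<dots> = (\<Sum>j\<in>J. c j * weight (f j))"
    by (rule sum.cong[OF refl]) (subst weight_superset[OF fW], auto simp: W_def)
  finally show ?thesis .
qed

lemma weight_padd: assumes "fin A" "fin B" shows "weight (padd A B) = weight A + weight B"
proof -
  let ?W = "{w. A w \<noteq> 0} \<union> {w. B w \<noteq> 0}"
  have f: "finite ?W" using assms unfolding fin_def by simp
  have "weight (padd A B) = (\<Sum>w\<in>?W. padd A B w * weight_word w)"
    by (rule weight_superset[OF f]) (auto simp: padd_def)
  also have "\<dots> = weight A + weight B"
    by (simp add: padd_def algebra_simps sum.distrib weight_superset[OF f])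
  finally show ?thesis .
qed

lemma weight_psub: assumes "fin A" "fin B" shows "weight (psub A B) = weight A - weight B"
proof -
  let ?W = "{w. A w \<noteq> 0} \<union> {w. B w \<noteq> 0}"
  have f: "finite ?W" using assms unfolding fin_def by simp
  have "weight (psub A B) = (\<Sum>w\<in>?W. psub A B w * weight_word w)"
    by (rule weight_superset[OF f]) (auto simp: psub_def)
  also have "\<dots> = weight A - weight B"
    by (simp add: psub_def algebra_simps sum_subtractf weight_superset[OF f])
  finally show ?thesis .
qed

lemma weight_psmult: assumes "fin A" shows "weight (psmult c A) = c * weight A"
proof -
  let ?W = "{w. A w \<noteq> 0}"
  have f: "finite ?W" using assms unfolding fin_def by simp
  have "weight (psmult c A) = (\<Sum>w\<in>?W. psmult c A w * weight_word w)"
    by (rule weight_superset[OF f]) (auto simp: psmult_def)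
  also have "\<dots> = c * weight A"
    by (simp add: psmult_def algebra_simps sum_distrib_left weight_def)
  finally show ?thesis .
qed

lemma weight_word_append: "weight_word (u @ v) = weight_word u * weight_word v"
  unfolding weight_word_def by (simp add: power_add algebra_simps)

lemma weight_pre: assumes "fin A" shows "weight (pre u A) = weight_word u * weight A"
proof -
  have "weight (pre u A) = (\<Sum>w\<in>(\<lambda>v. u @ v) ` {w. A w \<noteq> 0}. pre u A w * weight_word w)"
    unfolding weight_def supp_pre ..
  also have "\<dots> = (\<Sum>v\<in>{w. A w \<noteq> 0}. pre u A (u @ v) * weight_word (u @ v))"
    by (subst sum.reindex) (auto simp: inj_on_def)
  also have "\<dots> = weight_word u * weight A"
    by (simp add: pre_def weight_word_append weight_def sum_distrib_left algebra_simps)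
  finally show ?thesis .
qed

lemma pbar_pre: "pbar (pre u A) = padd (pre u (pbar A))
   (psmult (A []) (if u \<noteq> [] \<and> last u = LN then pmono (butlast u) else pzero))"
proof (rule ext)
  fix w
  show "pbar (pre u A) w = padd (pre u (pbar A))
   (psmult (A []) (if u \<noteq> [] \<and> last u = LN then pmono (butlast u) else pzero)) w"
  proof (cases "length u \<le> length w")
    case True
    then show ?thesis
      apply (auto simp: pbar_def pre_def padd_def psmult_def pmono_def pzero_def)
      by (cases u) auto
  next
    case False
    then have t1: "take (length u) (w @ [LN]) = w @ [LN]" "drop (length u) (w @ [LN]) = []" by auto
    have t2: "take (length u) w \<noteq> u"
    proof -
      have "take (length u) w = w" using False by simp
      moreover have "w \<noteq> u" using False by auto
      ultimately show ?thesis by simp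
    qed
    have t3: "(w @ [LN] = u) \<longleftrightarrow> (u \<noteq> [] \<and> last u = LN \<and> w = butlast u)"
    proof
      assume "w @ [LN] = u" then show "u \<noteq> [] \<and> last u = LN \<and> w = butlast u" by auto
    next
      assume h: "u \<noteq> [] \<and> last u = LN \<and> w = butlast u"
      then have u: "u \<noteq> []" and l: "last u = LN" and w: "w = butlast u" by auto
      show "w @ [LN] = u" using append_butlast_last_id[OF u] unfolding l w .
    qed
    have l: "pbar (pre u A) w = (if w @ [LN] = u then A [] else 0)"
      unfolding pbar_def pre_def t1 by simp
    have r1: "pre u (pbar A) w = 0" unfolding pre_def using t2 by simp
    have r2: "psmult (A []) (if u \<noteq> [] \<and> last u = LN then pmono (butlast u) else pzero) w
       = (if u \<noteq> [] \<and> last u = LN \<and> w = butlast u then A [] else 0)"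
      by (simp add: psmult_def pmono_def pzero_def)
    show ?thesis unfolding padd_def l r1 r2 t3 by simp
  qed
qed

lemma weight_pbar_pre: assumes "fin A"
  shows "weight (pbar (pre u A)) = weight_word u * weight (pbar A)
     + A [] * (if u \<noteq> [] \<and> last u = LN then weight_word (butlast u) else 0)"
proof -
  have w1: "weight (pmono v) = weight_word v" for v
    unfolding weight_def pmono_def by (simp add: Collect_conv_if)
  have w0: "weight pzero = 0" unfolding weight_def pzero_def by simp
  show ?thesis
    unfolding pbar_pre
    by (subst weight_padd) (auto intro!: fin_pre fin_pbar fin_psmult fin_mono fin_pzero assms
        simp: weight_pre fin_pbar assms weight_psmult w1 w0 weight_psmult[OF fin_mono] weight_psmult[OF fin_pzero])
qed

lemma pre_nil: "u \<noteq> [] \<Longrightarrow> pre u A [] = 0" unfolding pre_def by simp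




lemma RS_neg: "j < 0 \<Longrightarrow> RS k j = (pzero, pzero)"
  by (cases k) auto

lemma pNN: "pmul pN pN = pmono [LN, LN]" and pDN: "pmul pD pN = pmono [LD, LN]"
  by (simp_all add: pN_mono pD_mono pmul_mono pre_mono)

lemma RS_Suc:
  assumes "j \<ge> 0"
  shows "fst (RS (Suc k) j) = padd (psmult (-1) (padd (pre [LN,LN] (fst (RS k j))) (pre [LD] (fst (RS k j)))))
            (pre [LN] (snd (RS k j)))"
    "snd (RS (Suc k) j) = padd (psub (pre [LD,LN] (fst (RS k j))) (pre [LD] (snd (RS k j))))
            (pre [LN] (fst (RS k (j - 1))))"
  using assms apply (simp_all add: pNN pDN pmul_padd_left)
  by (simp_all add: pmul_mono pN_mono pD_mono)

lemma RS_props: "fin (fst (RS k j)) \<and> fin (snd (RS k j)) \<and>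
   fst (RS k j) [] = (if k = 0 \<and> j = 0 then 1 else 0) \<and> snd (RS k j) [] = 0"
proof (induction k arbitrary: j)
  case 0
  then show ?case using fin_mono[of "[]"] fin_pzero by (auto simp: pmono_def pone_def pzero_def)
next
  case (Suc k)
  show ?case
  proof (cases "j < 0")
    case True
    then show ?thesis by (simp add: RS_neg fin_pzero[unfolded pzero_def] pzero_def)
  next
    case False
    then have j: "j \<ge> 0" by simp
    show ?thesis unfolding RS_Suc[OF j]
      using Suc.IH[of j] Suc.IH[of "j-1"]
      by (intro conjI, (auto intro!: fin_padd fin_psub fin_psmult fin_pre)[2],
          (auto simp: padd_def psub_def psmult_def pre_def)[2])
  qed
qed

definition bR :: "nat \<Rightarrow> int \<Rightarrow> real" where "bR k j = weight (pbar (fst (RS k j)))"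
definition bS :: "nat \<Rightarrow> int \<Rightarrow> real" where "bS k j = weight (pbar (snd (RS k j)))"

lemma pbar_padd: "pbar (padd A B) = padd (pbar A) (pbar B)" by (simp add: pbar_def padd_def)
lemma pbar_psub: "pbar (psub A B) = psub (pbar A) (pbar B)" by (simp add: pbar_def psub_def)
lemma pbar_psmult: "pbar (psmult c A) = psmult c (pbar A)" by (simp add: pbar_def psmult_def)

lemma weight_zero: "weight (\<lambda>w. 0) = 0" unfolding weight_def by simp

lemma bR0: "bR 0 j = 0" and bS0: "bS 0 j = 0"
  unfolding bR_def bS_def
  by (auto simp: pbar_def pone_def pzero_def weight_zero)

lemma bar_rec:
  assumes j: "j \<ge> 0"
  shows "bR (Suc k) j = -3 * bR k j - 2 * (if k = 0 \<and> j = 0 then 1 else 0) + 2 * bS k j"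
    "bS (Suc k) j = -2 * bR k j - (if k = 0 \<and> j = 0 then 1 else 0) + bS k j + 2 * bR k (j - 1)
        + (if k = 0 \<and> j = 1 then 1 else 0)"
proof -
  note P = RS_props[of k j] RS_props[of k "j - 1"]
  have ww: "weight_word [LN,LN] = 4" "weight_word [LD] = -1" "weight_word [LN] = 2"
    "weight_word [LD,LN] = -2" "weight_word [] = 1"
    by (simp_all add: weight_word_def)
  show "bR (Suc k) j = -3 * bR k j - 2 * (if k = 0 \<and> j = 0 then 1 else 0) + 2 * bS k j"
    unfolding bR_def bS_def RS_Suc[OF j] pbar_padd pbar_psmult
    using P
    by (simp add: weight_padd weight_psmult fin_padd fin_psmult fin_pre fin_pbar weight_pbar_pre ww)
  show "bS (Suc k) j = -2 * bR k j - (if k = 0 \<and> j = 0 then 1 else 0) + bS k j + 2 * bR k (j - 1)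
        + (if k = 0 \<and> j = 1 then 1 else 0)"
    unfolding bR_def bS_def RS_Suc[OF j] pbar_padd pbar_psub
    using P
    by (simp add: weight_padd weight_psub fin_padd fin_psub fin_pre fin_pbar weight_pbar_pre ww)
qed




definition Ef :: "nat \<Rightarrow> int \<Rightarrow> real" where
  "Ef m j = (if j < 0 then 0 else 4 ^ nat j * real (m choose (2 * nat j)))"
definition Of :: "nat \<Rightarrow> int \<Rightarrow> real" where
  "Of m j = (if j < 0 then 0 else 4 ^ nat j * real (m choose (2 * nat j + 1)))"
definition BRc :: "nat \<Rightarrow> int \<Rightarrow> real" where
  "BRc m j = (-1) ^ m * (-2 * Ef m j - 2 * Of m j - 2 * Of m (j - 1))"
definition BSc :: "nat \<Rightarrow> int \<Rightarrow> real" where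
  "BSc m j = (-1) ^ m * (- Ef m j + Ef m (j - 1) - 2 * Of m j + 2 * Of m (j - 1))"

lemma Ef_Suc: "Ef (Suc m) j = Ef m j + 4 * Of m (j - 1)"
proof (cases "j < 0")
  case True then show ?thesis by (simp add: Ef_def Of_def)
next
  case False
  then obtain i where i: "j = int i" by (metis nonneg_int_cases not_less)
  show ?thesis
  proof (cases i)
    case 0 then show ?thesis using i by (simp add: Ef_def Of_def)
  next
    case (Suc i')
    then have a: "nat j = Suc i'" "nat (j - 1) = i'" "\<not> j - 1 < 0" "\<not> j < 0" using i by auto
    have b: "2 * Suc i' = Suc (2 * i' + 1)" by simp
    have c: "real (Suc m choose (2 * Suc i')) = real (m choose (2 * i' + 1)) + real (m choose (2 * Suc i'))"
      by (subst b, subst binomial_Suc_Suc, simp)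
    show ?thesis using a c by (simp add: Ef_def Of_def algebra_simps)
  qed
qed

lemma Of_Suc: "Of (Suc m) j = Of m j + Ef m j"
  by (simp add: Ef_def Of_def algebra_simps)

lemma bRS_neg: "j < 0 \<Longrightarrow> bR k j = 0 \<and> bS k j = 0"
  by (simp add: bR_def bS_def RS_neg pbar_def pzero_def weight_zero)

lemma BRSc_neg: "j < 0 \<Longrightarrow> BRc m j = 0 \<and> BSc m j = 0"
  by (simp add: BRc_def BSc_def Ef_def Of_def)

lemma closed_form: "bR (Suc m) j = BRc m j \<and> bS (Suc m) j = BSc m j"
proof (induction m arbitrary: j)
  case 0
  show ?case
  proof (cases "j < 0")
    case True then show ?thesis using bRS_neg BRSc_neg by simp
  next
    case False
    then have j: "j \<ge> 0" by simp
    have e: "Ef 0 j = (if j = 0 then 1 else 0)" "Ef 0 (j - 1) = (if j = 1 then 1 else 0)"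
      "Of 0 j = 0" "Of 0 (j - 1) = 0"
      using j by (auto simp: Ef_def Of_def)
    show ?thesis using j
      by (simp add: bar_rec[OF j] bR0 bS0 BRc_def BSc_def e)
  qed
next
  case (Suc m)
  show ?case
  proof (cases "j < 0")
    case True then show ?thesis using bRS_neg BRSc_neg by simp
  next
    case False
    then have j: "j \<ge> 0" by simp
    have "j - 1 - 1 = j - 2" by simp
    then show ?thesis
      by (simp add: bar_rec[OF j, of "Suc m"] Suc.IH BRc_def BSc_def Ef_Suc Of_Suc algebra_simps)
  qed
qed




lemma pascal_alt:
  fixes g :: "nat \<Rightarrow> real"
  shows "(\<Sum>j\<le>Suc m. (-1)^j * real (Suc m choose j) * g j)
       = (\<Sum>j\<le>m. (-1)^j * real (m choose j) * (g j - g (Suc j)))"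
proof -
  define A where "A = (\<Sum>i\<le>m. (-1)^i * real (m choose Suc i) * g (Suc i))"
  define B where "B = (\<Sum>i\<le>m. (-1)^i * real (m choose i) * g (Suc i))"
  have t: "(-1)^(Suc i) * real (Suc m choose Suc i) * g (Suc i)
     = - ((-1)^i * real (m choose i) * g (Suc i)) - (-1)^i * real (m choose Suc i) * g (Suc i)" for i
    by (simp add: algebra_simps)
  have 1: "(\<Sum>j\<le>Suc m. (-1)^j * real (Suc m choose j) * g j) = g 0 - B - A"
    unfolding A_def B_def
    by (simp only: sum.atMost_Suc_shift t sum_subtractf sum_negf; simp)
  have "(\<Sum>j\<le>m. (-1)^j * real (m choose j) * g j) = (\<Sum>j\<le>Suc m. (-1)^j * real (m choose j) * g j)"
    by simp
  also have "\<dots> = g 0 - A"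
    unfolding A_def by (subst sum.atMost_Suc_shift) (simp add: sum_negf)
  finally have 2: "(\<Sum>j\<le>m. (-1)^j * real (m choose j) * g j) = g 0 - A" .
  have "(\<Sum>j\<le>m. (-1)^j * real (m choose j) * (g j - g (Suc j)))
      = (\<Sum>j\<le>m. (-1)^j * real (m choose j) * g j) - B"
    unfolding B_def by (simp add: algebra_simps sum_subtractf)
  then show ?thesis using 1 2 by simp
qed

lemma deg_diff_shift:
  fixes p :: "real poly"
  shows "p - pcompose p [:1,1:] = 0 \<or> degree (p - pcompose p [:1,1:]) < degree p"
proof (cases "degree p = 0")
  case True
  then obtain c where "p = [:c:]" by (metis degree_eq_zeroE)
  then show ?thesis by simp
next
  case False
  let ?q = "pcompose p [:1,1:]"
  have dq: "degree ?q = degree p" by (simp add: degree_pcompose)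
  have lq: "lead_coeff ?q = lead_coeff p" by (simp add: lead_coeff_comp)
  have c0: "coeff (p - ?q) (degree p) = 0" using dq lq by simp
  have le: "degree (p - ?q) \<le> degree p" using degree_diff_le[of p "degree p" ?q] dq by simp
  show ?thesis
  proof (cases "p - ?q = 0")
    case True then show ?thesis by simp
  next
    case False
    then have nz: "p - ?q \<noteq> 0" .
    have "degree (p - ?q) \<noteq> degree p"
    proof
      assume "degree (p - ?q) = degree p"
      then have "coeff (p - ?q) (degree (p - ?q)) = 0" using c0 by simp
      with nz show False by (metis leading_coeff_0_iff)
    qed
    with le show ?thesis by simp
  qed
qed

lemma alt_poly_zero:
  fixes p :: "real poly"
  shows "degree p < m \<Longrightarrow> (\<Sum>j\<le>m. (-1)^j * real (m choose j) * poly p (real j)) = 0"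
proof (induction m arbitrary: p)
  case 0 then show ?case by simp
next
  case (Suc m)
  let ?q = "p - pcompose p [:1,1:]"
  have eq: "poly p (real j) - poly p (real (Suc j)) = poly ?q (real j)" for j
    by (simp add: poly_pcompose algebra_simps)
  have "(\<Sum>j\<le>Suc m. (-1)^j * real (Suc m choose j) * poly p (real j))
      = (\<Sum>j\<le>m. (-1)^j * real (m choose j) * poly ?q (real j))"
    by (subst pascal_alt) (simp add: poly_pcompose algebra_simps)
  also have "\<dots> = 0"
  proof (cases "?q = 0")
    case True then show ?thesis by simp
  next
    case False
    then have "degree ?q < degree p" using deg_diff_shift[of p] by simp
    then have "degree ?q < m" using Suc.prems by simp
    from Suc.IH[OF this] show ?thesis by simp
  qed
  finally show ?case .
qed

lemma alt_inv:
  fixes x :: real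
  shows "x > 0 \<Longrightarrow> (\<Sum>j\<le>m. (-1)^j * real (m choose j) * (1 / (x + real j)))
      = fact m / (\<Prod>i\<le>m. (x + real i))"
proof (induction m arbitrary: x)
  case 0 then show ?case by simp
next
  case (Suc m)
  have "(\<Sum>j\<le>Suc m. (-1)^j * real (Suc m choose j) * (1 / (x + real j)))
      = (\<Sum>j\<le>m. (-1)^j * real (m choose j) * (1 / (x + real j) - 1 / ((x + 1) + real j)))"
    by (subst pascal_alt) (simp add: algebra_simps)
  also have "\<dots> = (\<Sum>j\<le>m. (-1)^j * real (m choose j) * (1 / (x + real j)))
      - (\<Sum>j\<le>m. (-1)^j * real (m choose j) * (1 / ((x + 1) + real j)))"
    by (simp add: right_diff_distrib sum_subtractf)
  also have "\<dots> = fact m / (\<Prod>i\<le>m. (x + real i)) - fact m / (\<Prod>i\<le>m. ((x + 1) + real i))"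
    using Suc.IH[of x] Suc.IH[of "x+1"] Suc.prems by simp
  also have "\<dots> = fact (Suc m) / (\<Prod>i\<le>Suc m. (x + real i))"
  proof -
    define Pa where "Pa = (\<Prod>i\<le>m. (x + real i))"
    define Pb where "Pb = (\<Prod>i\<le>m. ((x + 1) + real i))"
    have pa: "Pa > 0" unfolding Pa_def using Suc.prems by (intro prod_pos) auto
    have pb: "Pb > 0" unfolding Pb_def using Suc.prems by (intro prod_pos) auto
    have s1: "(\<Prod>i\<le>Suc m. (x + real i)) = Pa * (x + real (Suc m))"
      unfolding Pa_def by simp
    have s2: "(\<Prod>i\<le>Suc m. (x + real i)) = x * Pb"
      unfolding Pb_def by (subst prod.atMost_Suc_shift) (simp add: add.assoc)
    have h: "Pa * (x + real (Suc m)) = x * Pb" using s1 s2 by argo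
    have xm: "x + real (Suc m) > 0" using Suc.prems by simp
    have "fact m / Pa = fact m * (x + real (Suc m)) / (Pa * (x + real (Suc m)))"
      using xm by (metis mult_divide_mult_cancel_right order_less_irrefl)
    then have a1: "fact m / Pa = fact m * (x + real (Suc m)) / (x * Pb)"
      unfolding h .
    have a2: "fact m / Pb = fact m * x / (x * Pb)"
      using Suc.prems by (metis mult.commute mult_divide_mult_cancel_right order_less_irrefl)
    have fs: "fact m * (x + real (Suc m)) - fact m * x = (fact (Suc m) :: real)"
      by (simp add: algebra_simps)
    have "fact m / Pa - fact m / Pb = fact (Suc m) / (x * Pb)"
      unfolding a1 a2 diff_divide_distrib[symmetric] fs ..
    then have "fact m / Pa - fact m / Pb = fact (Suc m) / (Pa * (x + real (Suc m)))"
      unfolding h .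
    then show ?thesis unfolding s1 Pa_def Pb_def .
  qed
  finally show ?case .
qed

lemma alt_rat:
  fixes p :: "real poly" and x :: real
  assumes "degree p \<le> m" "0 < m" "x > 0"
  shows "(\<Sum>j\<le>m. (-1)^j * real (m choose j) * (poly p (real j) / (x + real j)))
       = poly p (-x) * fact m / (\<Prod>i\<le>m. (x + real i))"
proof -
  define s where "s = synthetic_div p (-x)"
  have ps: "poly p y = (y + x) * poly s y + poly p (-x)" for y
    using arg_cong[OF synthetic_div_correct'[of "-x" p], of "\<lambda>q. poly q y"] unfolding s_def
    by (simp add: algebra_simps)
  have ds: "degree s < m" unfolding s_def using assms by (simp add: degree_synthetic_div)
  have "(\<Sum>j\<le>m. (-1)^j * real (m choose j) * (poly p (real j) / (x + real j)))
      = (\<Sum>j\<le>m. (-1)^j * real (m choose j) * poly s (real j))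
        + poly p (-x) * (\<Sum>j\<le>m. (-1)^j * real (m choose j) * (1 / (x + real j)))"
  proof -
    have "poly p (real j) / (x + real j) = poly s (real j) + poly p (-x) * (1 / (x + real j))" for j
      using assms(3) unfolding ps[of "real j"] by (simp add: field_simps)
    then show ?thesis by (simp add: algebra_simps sum.distrib sum_distrib_left)
  qed
  also have "\<dots> = poly p (-x) * fact m / (\<Prod>i\<le>m. (x + real i))"
    using alt_poly_zero[OF ds] alt_inv[OF assms(3)] by simp
  finally show ?thesis .
qed




lemma G: "real ((A + B) choose A) * (fact (A + a) * fact (B + b))
   = fact (A + B) * (pochhammer (real A + 1) a * pochhammer (real B + 1) b)"
proof -
  have f: "fact (X + c) = (fact X :: real) * pochhammer (real X + 1) c" for X c
    unfolding pochhammer_fact by (simp add: pochhammer_product' add.commute)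
  have g: "real ((A + B) choose A) * fact A * fact B = fact (A + B)"
  proof -
    have g0: "fact A * fact B * ((A+B) choose A) = (fact (A+B) :: nat)"
      using binomial_fact_lemma[of A "A+B"] by simp
    have "real (fact A * fact B * ((A+B) choose A)) = real (fact (A+B))" using g0 by simp
    then show ?thesis by (simp add: mult_ac)
  qed
  have "real ((A + B) choose A) * (fact A * pochhammer (real A + 1) a * (fact B * pochhammer (real B + 1) b))
    = (real ((A + B) choose A) * fact A * fact B) * (pochhammer (real A + 1) a * pochhammer (real B + 1) b)"
    by (simp only: mult_ac)
  then show ?thesis unfolding f g .
qed

lemma poch123: "pochhammer z 0 = 1" "pochhammer z 1 = z" "pochhammer z 2 = z * (z + 1)"
  "pochhammer (z::real) 3 = z * (z + 1) * (z + 2)"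
  by (simp_all add: numeral_eq_Suc pochhammer_Suc algebra_simps)

lemma choose_zero_real: "m < k \<Longrightarrow> real (m choose k) = 0" by simp

lemma T1: assumes "n \<ge> 1" "j \<le> n + 1"
  shows "real ((n + j - 1) choose (2*j)) * (fact (2*j+1) * fact (n+1-j))
    = fact (n + j - 1) * ((2 * real j + 1) * (real n + 1 - real j) * (real n - real j))"
proof (cases "j + 1 \<le> n")
  case True
  then obtain r where r: "n = j + 1 + r" using le_Suc_ex[OF True] by (auto simp: add.assoc)
  have e: "n + j - 1 = 2*j + r" "n + 1 - j = r + 2" using r by auto
  show ?thesis unfolding e G using r by (simp add: poch123 algebra_simps)
next
  case False
  then have "j = n \<or> j = n + 1" using assms by auto
  then show ?thesis using assms by (elim disjE) simp_all
qed

lemma T2: assumes "n \<ge> 1" "j \<le> n + 1" "j \<ge> 1"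
  shows "real ((n + j - 1) choose (2*j - 2)) * (fact (2*j+1) * fact (n+1-j))
    = fact (n + j - 1) * ((2 * real j + 1) * (2 * real j) * (2 * real j - 1))"
proof -
  obtain i where i: "j = i + 1" using le_Suc_ex[OF assms(3)] by (auto simp: add.commute)
  obtain r where r: "n = i + r" using assms i le_Suc_ex[of i n] by auto
  have e: "n + j - 1 = 2*i + r" "2*j - 2 = 2*i" "2*j+1 = 2*i + 3" "n + 1 - j = r + 0" using r i by auto
  show ?thesis unfolding e G using r i by (simp add: poch123 algebra_simps)
qed

lemma T3: assumes "n \<ge> 1" "j \<le> n + 1"
  shows "real ((n + j - 1) choose (2*j + 1)) * (fact (2*j+1) * fact (n+1-j))
    = fact (n + j - 1) * ((real n + 1 - real j) * (real n - real j) * (real n - real j - 1))"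
proof (cases "j + 2 \<le> n")
  case True
  then obtain r where r: "n = j + 2 + r" using le_Suc_ex[OF True] by (auto simp: add.assoc)
  have e: "n + j - 1 = (2*j+1) + r" "n + 1 - j = r + 3" using r by auto
  show ?thesis unfolding e G[of "2*j+1" r 0 3, unfolded add_0_right] using r by (simp add: poch123 algebra_simps)
next
  case False
  then have "j = n - 1 \<or> j = n \<or> j = n + 1" using assms by auto
  then show ?thesis using assms by (elim disjE) simp_all
qed

lemma T4: assumes "n \<ge> 1" "j \<le> n + 1" "j \<ge> 1"
  shows "real ((n + j - 1) choose (2*j - 1)) * (fact (2*j+1) * fact (n+1-j))
    = fact (n + j - 1) * ((2 * real j + 1) * (2 * real j) * (real n + 1 - real j))"
proof (cases "j \<le> n")
  case True
  obtain i where i: "j = i + 1" using le_Suc_ex[OF assms(3)] by (auto simp: add.commute)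
  obtain r where r: "n = i + 1 + r" using True i le_Suc_ex[of "i+1" n] by auto
  have e: "n + j - 1 = (2*i+1) + r" "2*j - 1 = 2*i+1" "2*j+1 = (2*i+1) + 2" "n + 1 - j = r + 1" using r i by auto
  show ?thesis unfolding e G using r i by (simp add: poch123 algebra_simps)
next
  case False
  then have "j = n + 1" using assms by auto
  then show ?thesis using assms by simp
qed

lemma Z1: assumes "n \<ge> 1" "j \<le> n"
  shows "real ((n + j - 1) choose (2*j)) * (fact (2*j+1) * fact (n-j))
    = fact (n + j - 1) * ((2 * real j + 1) * (real n - real j))"
proof (cases "j + 1 \<le> n")
  case True
  then obtain r where r: "n = j + 1 + r" using le_Suc_ex[OF True] by (auto simp: add.assoc)
  have e: "n + j - 1 = 2*j + r" "n - j = r + 1" using r by auto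
  show ?thesis unfolding e G using r by (simp add: poch123 algebra_simps)
next
  case False
  then have "j = n" using assms by auto
  then show ?thesis using assms by simp
qed

lemma Z3: assumes "n \<ge> 1" "j \<le> n"
  shows "real ((n + j - 1) choose (2*j + 1)) * (fact (2*j+1) * fact (n-j))
    = fact (n + j - 1) * ((real n - real j) * (real n - real j - 1))"
proof (cases "j + 2 \<le> n")
  case True
  then obtain r where r: "n = j + 2 + r" using le_Suc_ex[OF True] by (auto simp: add.assoc)
  have e: "n + j - 1 = (2*j+1) + r" "n - j = r + 2" using r by auto
  show ?thesis unfolding e G[of "2*j+1" r 0 2, unfolded add_0_right] using r by (simp add: poch123 algebra_simps)
next
  case False
  then have "j = n - 1 \<or> j = n" using assms by auto
  then show ?thesis using assms by (elim disjE) simp_all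
qed

lemma Z4: assumes "n \<ge> 1" "j \<le> n" "j \<ge> 1"
  shows "real ((n + j - 1) choose (2*j - 1)) * (fact (2*j+1) * fact (n-j))
    = fact (n + j - 1) * ((2 * real j + 1) * (2 * real j))"
proof -
  obtain i where i: "j = i + 1" using le_Suc_ex[OF assms(3)] by (auto simp: add.commute)
  obtain r where r: "n = i + 1 + r" using assms i le_Suc_ex[of "i+1" n] by auto
  have e: "n + j - 1 = (2*i+1) + r" "2*j - 1 = 2*i+1" "2*j+1 = (2*i+1) + 2" "n - j = r + 0" using r i by auto
  show ?thesis unfolding e G using r i by (simp add: poch123 algebra_simps)
qed




definition Qa :: "nat \<Rightarrow> real \<Rightarrow> real" where
  "Qa n x = 8*x^2 + (16*(real n)^2 + 4*real n - 2)*x + (-8*(real n)^3 - 4*(real n)^2 + 4*real n)"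
definition PP :: "nat \<Rightarrow> real poly" where "PP n = (\<Prod>i\<in>{0..<n-1}. [:3/2 + real i, 1:])"
definition pa :: "nat \<Rightarrow> real poly" where
  "pa n = PP n * [:-8*(real n)^3 - 4*(real n)^2 + 4*real n, 16*(real n)^2 + 4*real n - 2, 8:]"
definition pz :: "nat \<Rightarrow> real poly" where "pz n = PP n * [:4*(real n)^2, 2:]"

lemma poly_PP: "poly (PP n) x = pochhammer (x + 3/2) (n-1)"
  by (simp add: PP_def poly_prod pochhammer_prod algebra_simps)
lemma poly_pa: "poly (pa n) x = pochhammer (x + 3/2) (n-1) * Qa n x"
  by (simp add: pa_def poly_PP Qa_def algebra_simps power2_eq_square)
lemma poly_pz: "poly (pz n) x = pochhammer (x + 3/2) (n-1) * (4*(real n)^2 + 2*x)"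
  by (simp add: pz_def poly_PP algebra_simps)

lemma deg_PP: "degree (PP n) \<le> n - 1"
proof -
  have "degree (PP n) \<le> sum (degree \<circ> (\<lambda>i. [:3/2 + real i, 1::real:])) {0..<n-1}"
    unfolding PP_def by (rule degree_prod_sum_le) simp
  also have "\<dots> = n - 1" by simp
  finally show ?thesis .
qed
lemma deg_pa: assumes "n \<ge> 1" shows "degree (pa n) \<le> n + 1"
proof -
  have d2: "degree [:a, b, c::real:] \<le> 2" for a b c
    using degree_pCons_le[of a "[:b,c:]"] degree_pCons_le[of b "[:c:]"] by simp
  define q :: "real poly" where "q = [:-8*(real n)^3 - 4*(real n)^2 + 4*real n, 16*(real n)^2 + 4*real n - 2, 8:]"
  have "degree (PP n * q) \<le> degree (PP n) + degree q" by (rule degree_mult_le)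
  moreover have "degree (PP n) \<le> n - 1" by (rule deg_PP)
  moreover have "degree q \<le> 2" unfolding q_def by (rule d2)
  ultimately have "degree (PP n * q) \<le> n + 1" using assms by arith
  then show ?thesis unfolding pa_def q_def .
qed
lemma deg_pz: assumes "n \<ge> 1" shows "degree (pz n) \<le> n"
proof -
  have d1: "degree [:a, b::real:] \<le> 1" for a b
    using degree_pCons_le[of a "[:b:]"] by simp
  define q :: "real poly" where "q = [:4*(real n)^2, 2:]"
  have "degree (PP n * q) \<le> degree (PP n) + degree q" by (rule degree_mult_le)
  moreover have "degree (PP n) \<le> n - 1" by (rule deg_PP)
  moreover have "degree q \<le> 1" unfolding q_def by (rule d1)
  ultimately have "degree (PP n * q) \<le> n" using assms by arith
  then show ?thesis unfolding pz_def q_def .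
qed

lemma F1: "fact (2*j+1) = 4^j * fact j * pochhammer (3/2::real) j"
proof (induction j)
  case 0 then show ?case by simp
next
  case (Suc j)
  have e: "2 * Suc j + 1 = Suc (Suc (2*j+1))" by simp
  show ?case unfolding e using Suc by (simp add: pochhammer_rec' algebra_simps)
qed

lemma F2: assumes "n \<ge> 1"
  shows "pochhammer (real n + 1/2) j * pochhammer (3/2) (n-1) = pochhammer (3/2::real) j * pochhammer (real j + 3/2) (n-1)"
proof -
  have c: "3/2 + real (n-1) = real n + 1/2" using assms by (simp add: of_nat_diff)
  have a: "pochhammer (3/2::real) ((n-1) + j) = pochhammer (3/2) (n-1) * pochhammer (real n + 1/2) j"
    using pochhammer_product'[of "3/2::real" "n-1" j] unfolding c .
  have b: "pochhammer (3/2::real) (j + (n-1)) = pochhammer (3/2) j * pochhammer (real j + 3/2) (n-1)"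
    using pochhammer_product'[of "3/2::real" j "n-1"] by (simp add: add.commute)
  show ?thesis using a b by (simp add: add.commute mult.commute)
qed

lemma poch_pos: "x > 0 \<Longrightarrow> pochhammer (x::real) k > 0"
  by (simp add: pochhammer_pos)

lemma Gamma_poch: assumes "z > 0" shows "Gamma (z + real k) = pochhammer z k * Gamma (z::real)"
proof -
  have "z \<notin> \<int>\<^sub>\<le>\<^sub>0" using assms by auto
  then show ?thesis using pochhammer_Gamma[of z k] Gamma_nonzero[of z] by simp
qed

lemma BA: "brace (int n) (int j) = pochhammer (real n + 1/2) j / fact (n + j)"
proof -
  have "Gamma (real n + real j + 1/2) = pochhammer (real n + 1/2) j * Gamma (real n + 1/2)"
    using Gamma_poch[of "real n + 1/2" j] by (simp add: algebra_simps)
  moreover have "Gamma (real n + 1/2) \<noteq> 0"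
    by (rule Gamma_nonzero) auto
  ultimately show ?thesis unfolding brace_def
    by (simp add: nat_add_distrib)
qed

lemma cancelG: "(G::real) \<noteq> 0 \<Longrightarrow> (p * G) / (f * (c * G)) = p / (f * c)"
proof -
  assume "G \<noteq> 0"
  then have "(p * G) / ((f * c) * G) = p / (f * c)" by (rule nonzero_mult_divide_mult_cancel_right)
  then show ?thesis by (simp only: mult.assoc)
qed

lemma BZ: "brace (int n + 1) (int j - 1) = pochhammer (real n + 1/2) j / (fact (n + j) * (real n + 1/2))"
proof -
  have h1: "Gamma (real n + real j + 1/2) = pochhammer (real n + 1/2) j * Gamma (real n + 1/2)"
    using Gamma_poch[of "real n + 1/2" j] by (simp add: algebra_simps)
  have h2: "Gamma (real n + 1 + 1/2) = (real n + 1/2) * Gamma (real n + 1/2)"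
    using Gamma_poch[of "real n + 1/2" 1] by (simp add: algebra_simps)
  have G0: "Gamma (real n + 1/2) \<noteq> 0"
    by (rule Gamma_nonzero) auto
  have np: "real n + 1/2 > 0" by simp
  have b: "brace (int n + 1) (int j - 1) = Gamma (real n + real j + 1/2) / (fact (n+j) * Gamma (real n + 1 + 1/2))"
    unfolding brace_def by (simp add: algebra_simps nat_add_distrib)
  show ?thesis unfolding b h1 h2 cancelG[OF G0] ..
qed

lemma Ef_nat: "Ef m (int j) = 4^j * real (m choose (2*j))" by (simp add: Ef_def)
lemma Of_nat: "Of m (int j) = 4^j * real (m choose (2*j+1))" by (simp add: Of_def)
lemma Ef_nat1: "j \<ge> 1 \<Longrightarrow> 4 * Ef m (int j - 1) = 4^j * real (m choose (2*j - 2))"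
proof -
  assume "j \<ge> 1"
  then obtain i where "j = Suc i" by (cases j) auto
  then show ?thesis by (simp add: Ef_def)
qed
lemma Of_nat1: "j \<ge> 1 \<Longrightarrow> 4 * Of m (int j - 1) = 4^j * real (m choose (2*j - 1))"
proof -
  assume "j \<ge> 1"
  then obtain i where "j = Suc i" by (cases j) auto
  then show ?thesis by (simp add: Of_def)
qed

lemma K_alpha: assumes n: "n \<ge> 1" and j: "j \<le> n + 1"
  shows "4 * BSc (n+j-1) (int j) * (fact (2*j+1) * fact (n+1-j))
     = (-1)^(n+j-1) * 4^j * fact (n+j-1) * Qa n (real j)"
proof -
  define m where "m = n + j - 1"
  define a :: real where "a = fact (2*j+1) * fact (n+1-j)"
  define P1 where "P1 = (2 * real j + 1) * (real n + 1 - real j) * (real n - real j)"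
  define P2 where "P2 = (2 * real j + 1) * (2 * real j) * (2 * real j - 1)"
  define P3 where "P3 = (real n + 1 - real j) * (real n - real j) * (real n - real j - 1)"
  define P4 where "P4 = (2 * real j + 1) * (2 * real j) * (real n + 1 - real j)"
  have e1: "Ef m (int j) * a = 4^j * (fact m * P1)"
    using T1[OF n j] unfolding Ef_nat m_def a_def P1_def by (simp add: mult.assoc)
  have e2: "4 * Ef m (int j - 1) * a = 4^j * (fact m * P2)"
  proof (cases "j = 0")
    case True then show ?thesis by (simp add: Ef_def P2_def)
  next
    case False
    then have "j \<ge> 1" by simp
    then show ?thesis using T2[OF n j] unfolding Ef_nat1[OF \<open>j\<ge>1\<close>] m_def a_def P2_def by (simp add: mult.assoc)
  qed
  have o1: "Of m (int j) * a = 4^j * (fact m * P3)"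
    using T3[OF n j] unfolding Of_nat m_def a_def P3_def by (simp add: mult.assoc)
  have o2: "4 * Of m (int j - 1) * a = 4^j * (fact m * P4)"
  proof (cases "j = 0")
    case True then show ?thesis by (simp add: Of_def P4_def)
  next
    case False
    then have "j \<ge> 1" by simp
    then show ?thesis using T4[OF n j] unfolding Of_nat1[OF \<open>j\<ge>1\<close>] m_def a_def P4_def by (simp add: mult.assoc)
  qed
  have pid: "-4*P1 + P2 - 8*P3 + 2*P4 = Qa n (real j)"
    unfolding P1_def P2_def P3_def P4_def Qa_def by (simp add: algebra_simps power2_eq_square power3_eq_cube)
  have "4 * BSc m (int j) * a = (-1)^m * (-4 * (Ef m (int j) * a) + (4 * Ef m (int j - 1) * a)
        - 8 * (Of m (int j) * a) + 2 * (4 * Of m (int j - 1) * a))"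
    unfolding BSc_def by (simp add: algebra_simps)
  also have "\<dots> = (-1)^m * 4^j * fact m * (-4*P1 + P2 - 8*P3 + 2*P4)"
    unfolding e1 e2 o1 o2 by (simp add: algebra_simps)
  finally show ?thesis unfolding pid m_def a_def .
qed

lemma K_z: assumes n: "n \<ge> 1" and j: "j \<le> n"
  shows "4 * BRc (n+j-1) (int j) * (fact (2*j+1) * fact (n-j))
     = (-1)^(n+j-1) * 4^j * fact (n+j-1) * (-2 * (4 * (real n)^2 + 2 * real j))"
proof -
  define m where "m = n + j - 1"
  define a :: real where "a = fact (2*j+1) * fact (n-j)"
  define P1 where "P1 = (2 * real j + 1) * (real n - real j)"
  define P3 where "P3 = (real n - real j) * (real n - real j - 1)"
  define P4 where "P4 = (2 * real j + 1) * (2 * real j)"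
  have e1: "Ef m (int j) * a = 4^j * (fact m * P1)"
    using Z1[OF n j] unfolding Ef_nat m_def a_def P1_def by (simp add: mult.assoc)
  have o1: "Of m (int j) * a = 4^j * (fact m * P3)"
    using Z3[OF n j] unfolding Of_nat m_def a_def P3_def by (simp add: mult.assoc)
  have o2: "4 * Of m (int j - 1) * a = 4^j * (fact m * P4)"
  proof (cases "j = 0")
    case True then show ?thesis by (simp add: Of_def P4_def)
  next
    case False
    then have "j \<ge> 1" by simp
    then show ?thesis using Z4[OF n j] unfolding Of_nat1[OF \<open>j\<ge>1\<close>] m_def a_def P4_def by (simp add: mult.assoc)
  qed
  have pid: "-8*P1 - 8*P3 - 2*P4 = -2 * (4 * (real n)^2 + 2 * real j)"
    unfolding P1_def P3_def P4_def by (simp add: algebra_simps power2_eq_square)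
  have "4 * BRc m (int j) * a = (-1)^m * (-8 * (Ef m (int j) * a) - 8 * (Of m (int j) * a)
        - 2 * (4 * Of m (int j - 1) * a))"
    unfolding BRc_def by (simp add: algebra_simps)
  also have "\<dots> = (-1)^m * 4^j * fact m * (-8*P1 - 8*P3 - 2*P4)"
    unfolding e1 o1 o2 by (simp add: algebra_simps)
  finally show ?thesis unfolding pid m_def a_def .
qed




definition Ka :: "nat \<Rightarrow> real" where
  "Ka n = (-1)^(n-1) / (4 * fact (n+1) * pochhammer (3/2) (n-1))"
definition Kz :: "nat \<Rightarrow> real" where
  "Kz n = (-1)^(n-1) * (-2) / (4 * (real n + 1/2) * fact n * pochhammer (3/2) (n-1))"

lemma sign_split: "n \<ge> 1 \<Longrightarrow> ((-1::real)^(n+j-1)) = (-1)^(n-1) * (-1)^j"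
  by (simp add: power_add[symmetric])

lemma alg1:
  fixes F Fj Fr Fn1 P32j P32n x f4 sa tb Pj q :: real
  assumes "F\<noteq>0" "Fj\<noteq>0" "Fr\<noteq>0" "Fn1\<noteq>0" "P32j\<noteq>0" "P32n\<noteq>0" "x\<noteq>0" "f4\<noteq>0"
  shows "(P32j * Pj/P32n)/(x * F)  *  (sa * tb * f4 * F * q/(4 * (f4 * Fj * P32j * Fr)))
     = sa/(4 * Fn1 * P32n)  *  (tb * (Fn1/(Fj * Fr)) * (Pj * q/x))"
  using assms by (simp add: field_simps)

lemma alg2:
  fixes F Fj Fr Fn P32j P32n x f4 sa tb Pj v c :: real
  assumes "F\<noteq>0" "Fj\<noteq>0" "Fr\<noteq>0" "Fn\<noteq>0" "P32j\<noteq>0" "P32n\<noteq>0" "x\<noteq>0" "f4\<noteq>0" "c\<noteq>0"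
  shows "(P32j * Pj/P32n)/(x * F * c)  *  (sa * tb * f4 * F * (-2 * v)/(4 * (f4 * Fj * P32j * Fr)))
     = sa * (-2)/(4 * c * Fn * P32n)  *  (tb * (Fn/(Fj * Fr)) * (Pj * v/x))"
  using assms by (simp add: field_simps)

lemma term_alpha: assumes n: "n \<ge> 1" and j: "j \<le> n + 1"
  shows "brace (int n) (int j) * BSc (n+j-1) (int j)
    = Ka n * ((-1)^j * real ((n+1) choose j) * (poly (pa n) (real j) / (real n + real j)))"
proof -
  define m where "m = n + j - 1"
  define a :: real where "a = fact (2*j+1) * fact (n+1-j)"
  have apos: "a > 0" unfolding a_def by simp
  have h2: "BSc m (int j) = (-1)^m * 4^j * fact m * Qa n (real j) / (4 * a)"
    using K_alpha[OF n j] apos unfolding m_def a_def by (simp add: field_simps)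
  have h3: "a = 4^j * fact j * pochhammer (3/2) j * fact (n+1-j)"
    unfolding a_def F1 ..
  have h4: "(fact (n+j) :: real) = (real n + real j) * fact m"
  proof -
    have e: "n + j = Suc m" unfolding m_def using n by simp
    have r: "real (Suc m) = real n + real j" unfolding e[symmetric] by simp
    have "(fact (n+j) :: real) = fact (Suc m)" unfolding e ..
    also have "\<dots> = real (Suc m) * fact m" by (rule fact_Suc)
    finally show ?thesis unfolding r .
  qed
  have p32: "pochhammer (3/2::real) (n-1) > 0" "pochhammer (3/2::real) j > 0"
    by (simp_all add: poch_pos)
  have h5: "pochhammer (real n + 1/2) j = pochhammer (3/2) j * pochhammer (real j + 3/2) (n-1) / pochhammer (3/2::real) (n-1)"
    using F2[OF n, of j] p32 by (simp add: field_simps)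
  have h6: "real ((n+1) choose j) = fact (n+1) / (fact j * fact (n+1-j))"
    using binomial_fact[of j "n+1"] j by simp
  have h7: "((-1::real)^m) = (-1)^(n-1) * (-1)^j" unfolding m_def using sign_split[OF n] .
  have nj: "real n + real j > 0" using n by simp
  show ?thesis
    unfolding BA h2[unfolded m_def] h3 h4[unfolded m_def] h5 h6 h7[unfolded m_def] poly_pa Ka_def
    by (rule alg1) (use p32 nj in auto)
qed

lemma term_z: assumes n: "n \<ge> 1" and j: "j \<le> n"
  shows "brace (int n + 1) (int j - 1) * BRc (n+j-1) (int j)
    = Kz n * ((-1)^j * real (n choose j) * (poly (pz n) (real j) / (real n + real j)))"
proof -
  define m where "m = n + j - 1"
  define a :: real where "a = fact (2*j+1) * fact (n-j)"
  have apos: "a > 0" unfolding a_def by simp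
  have h2: "BRc m (int j) = (-1)^m * 4^j * fact m * (-2 * (4 * (real n)^2 + 2 * real j)) / (4 * a)"
    using K_z[OF n j] apos unfolding m_def a_def by (simp add: field_simps)
  have h3: "a = 4^j * fact j * pochhammer (3/2) j * fact (n-j)"
    unfolding a_def F1 ..
  have h4: "(fact (n+j) :: real) = (real n + real j) * fact m"
  proof -
    have e: "n + j = Suc m" unfolding m_def using n by simp
    have r: "real (Suc m) = real n + real j" unfolding e[symmetric] by simp
    have "(fact (n+j) :: real) = fact (Suc m)" unfolding e ..
    also have "\<dots> = real (Suc m) * fact m" by (rule fact_Suc)
    finally show ?thesis unfolding r .
  qed
  have p32: "pochhammer (3/2::real) (n-1) > 0" "pochhammer (3/2::real) j > 0"
    by (simp_all add: poch_pos)
  have h5: "pochhammer (real n + 1/2) j = pochhammer (3/2) j * pochhammer (real j + 3/2) (n-1) / pochhammer (3/2::real) (n-1)"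
    using F2[OF n, of j] p32 by (simp add: field_simps)
  have h6: "real (n choose j) = fact n / (fact j * fact (n-j))"
    using binomial_fact[of j n] j by simp
  have h7: "((-1::real)^m) = (-1)^(n-1) * (-1)^j" unfolding m_def using sign_split[OF n] .
  have nj: "real n + real j > 0" using n by simp
  show ?thesis
    unfolding BZ h2[unfolded m_def] h3 h4[unfolded m_def] h5 h6 h7[unfolded m_def] poly_pz Kz_def
    by (rule alg2) (use p32 nj in auto)
qed




lemma nat_ii: "nat (int n + int j) = n + j" by simp

lemma red_alpha: "weight (pbar (alpha n)) = (\<Sum>j\<in>{0..n+1}. brace (int n) (int j) * bS (n+j) (int j))"
proof -
  have "pbar (alpha n) = (\<lambda>w. \<Sum>j\<in>{0..n+1}. brace (int n) (int j) * pbar (snd (RS (n+j) (int j))) w)"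
    by (rule ext) (simp add: pbar_def alpha_def S_def nat_ii)
  then show ?thesis unfolding bS_def
    by (simp only:) (rule weight_sum, simp_all add: fin_pbar RS_props)
qed

lemma red_z: "weight (pbar (Zp n)) = (\<Sum>j\<in>{0..n}. brace (int n + 1) (int j - 1) * bR (n+j) (int j))"
proof -
  have "pbar (Zp n) = (\<lambda>w. \<Sum>j\<in>{0..n}. brace (int n + 1) (int j - 1) * pbar (fst (RS (n+j) (int j))) w)"
    by (rule ext) (simp add: pbar_def Zp_def R_def nat_ii)
  then show ?thesis unfolding bR_def
    by (simp only:) (rule weight_sum, simp_all add: fin_pbar RS_props)
qed

lemma sum_alpha: assumes n: "n \<ge> 1"
  shows "weight (pbar (alpha n)) = Ka n * (poly (pa n) (- real n) * fact (n+1) / (\<Prod>i\<le>n+1. real n + real i))"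
proof -
  have "weight (pbar (alpha n)) = (\<Sum>j\<le>n+1. Ka n * ((-1)^j * real ((n+1) choose j) * (poly (pa n) (real j) / (real n + real j))))"
    unfolding red_alpha atLeast0AtMost
  proof (rule sum.cong[OF refl])
    fix j assume "j \<in> {..n+1}"
    then have j: "j \<le> n + 1" by simp
    have "n + j = Suc (n + j - 1)" using n by simp
    then have "bS (n+j) (int j) = BSc (n+j-1) (int j)" using closed_form[of "n+j-1" "int j"] by simp
    then show "brace (int n) (int j) * bS (n + j) (int j) =
      Ka n * ((-1)^j * real ((n+1) choose j) * (poly (pa n) (real j) / (real n + real j)))"
      using term_alpha[OF n j] by simp
  qed
  also have "\<dots> = Ka n * (\<Sum>j\<le>n+1. (-1)^j * real ((n+1) choose j) * (poly (pa n) (real j) / (real n + real j)))"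
    by (simp only: sum_distrib_left)
  also have "\<dots> = Ka n * (poly (pa n) (- real n) * fact (n+1) / (\<Prod>i\<le>n+1. real n + real i))"
    using alt_rat[OF deg_pa[OF n], of "real n"] n by simp
  finally show ?thesis .
qed

lemma sum_z: assumes n: "n \<ge> 1"
  shows "weight (pbar (Zp n)) = Kz n * (poly (pz n) (- real n) * fact n / (\<Prod>i\<le>n. real n + real i))"
proof -
  have "weight (pbar (Zp n)) = (\<Sum>j\<le>n. Kz n * ((-1)^j * real (n choose j) * (poly (pz n) (real j) / (real n + real j))))"
    unfolding red_z atLeast0AtMost
  proof (rule sum.cong[OF refl])
    fix j assume "j \<in> {..n}"
    then have j: "j \<le> n" by simp
    have "n + j = Suc (n + j - 1)" using n by simp
    then have "bR (n+j) (int j) = BRc (n+j-1) (int j)" using closed_form[of "n+j-1" "int j"] by simp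
    then show "brace (int n + 1) (int j - 1) * bR (n + j) (int j) =
      Kz n * ((-1)^j * real (n choose j) * (poly (pz n) (real j) / (real n + real j)))"
      using term_z[OF n j] by simp
  qed
  also have "\<dots> = Kz n * (\<Sum>j\<le>n. (-1)^j * real (n choose j) * (poly (pz n) (real j) / (real n + real j)))"
    by (simp only: sum_distrib_left)
  also have "\<dots> = Kz n * (poly (pz n) (- real n) * fact n / (\<Prod>i\<le>n. real n + real i))"
    using alt_rat[OF deg_pz[OF n], of "real n"] n by simp
  finally show ?thesis .
qed

lemma factm: "n \<ge> 1 \<Longrightarrow> (fact n :: real) = real n * fact (n - 1)"
  by (cases n) auto

lemma PF: assumes "n \<ge> 1" shows "(\<Prod>i\<le>l. real n + real i) * fact (n-1) = fact (n + l)"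
proof (induction l)
  case 0
  have "fact n = (real n) * fact (n - 1)"
    using assms by (rule factm)
  then show ?case by simp
next
  case (Suc l)
  have "(\<Prod>i\<le>Suc l. real n + real i) * fact (n-1) = ((\<Prod>i\<le>l. real n + real i) * fact (n-1)) * (real n + real (Suc l))"
    by (simp add: mult_ac)
  also have "\<dots> = fact (n + l) * (real n + real (Suc l))" unfolding Suc ..
  also have "\<dots> = fact (n + Suc l)" by (simp add: algebra_simps)
  finally show ?case .
qed

lemma D1: "(fact (2*n+1) :: real) = real (dfact (2*n+1)) * 2^n * fact n"
proof (induction n)
  case 0 then show ?case by simp
next
  case (Suc n)
  have e: "2 * Suc n + 1 = Suc (Suc (2*n+1))" by simp
  have d: "dfact (Suc (Suc (2*n+1))) = Suc (Suc (2*n+1)) * dfact (2*n+1)" by simp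
  show ?case unfolding e fact_Suc d using Suc by (simp add: algebra_simps)
qed

lemma D2: assumes "n \<ge> 1" shows "dfact (2*n+1) = (2*n+1) * dfact (2*n-1)"
proof -
  have e: "2*n+1 = Suc (Suc (2*n-1))" using assms by simp
  have "dfact (2*n+1) = Suc (Suc (2*n-1)) * dfact (2*n-1)" unfolding e by simp
  then show ?thesis unfolding e[symmetric] .
qed

lemma PM: assumes "n \<ge> 1"
  shows "pochhammer (- real n + 3/2) (n-1) = (-1)^(n-1) * pochhammer (1/2::real) (n-1)"
proof -
  have a: "- (real n - 3/2) = - real n + 3/2" by simp
  have b: "real n - 3/2 - real (n-1) + 1 = (1/2::real)" using assms by (simp add: of_nat_diff)
  show ?thesis using pochhammer_minus[of "real n - 3/2" "n-1"] unfolding a b .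
qed

lemma PH: assumes "n \<ge> 1" shows "pochhammer (1/2::real) (n-1) * (2 * real n - 1) = pochhammer (3/2) (n-1)"
proof -
  have "pochhammer (1/2::real) (Suc (n-1)) = 1/2 * pochhammer (3/2) (n-1)"
    by (simp add: pochhammer_rec)
  moreover have "pochhammer (1/2::real) (Suc (n-1)) = (1/2 + real (n-1)) * pochhammer (1/2) (n-1)"
    by (rule pochhammer_rec')
  moreover have "1/2 + real (n-1) = real n - (1/2::real)" using assms by (simp add: of_nat_diff)
  ultimately show ?thesis by (simp add: algebra_simps)
qed

lemma sq_sign: "((-1::real)^k) * (-1)^k = 1"
  by (simp add: power_add[symmetric])

lemma alg3:
  fixes sa P12 Fn1 Fm D t y P :: real
  assumes "sa * sa = 1" "P12 \<noteq> 0" "Fn1 \<noteq> 0" "Fm \<noteq> 0" "D \<noteq> 0" "t \<noteq> 0" "y \<ge> 1"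
    "P * Fm = (2 * y + 1) * D * t * (y * Fm)"
  shows "sa / (4 * Fn1 * (P12 * (2 * y - 1))) * ((sa * P12) * (- 6 * y * (2 * y + 1) * (2 * y - 1)) * Fn1 / P)
    = - 3 / (2 * t * D)"
proof -
  have P: "P = (2 * y + 1) * D * t * y" using assms(4,8) by (simp add: mult.assoc)
  have y1: "2 * y - 1 \<noteq> 0" "2 * y + 1 \<noteq> 0" "y \<noteq> 0" using assms(7) by auto
  have "y * (y * 4) \<ge> 4" using assms(7) mult_mono[of 1 y 4 "y*4"] by simp
  then have y2: "y * (y * 4) \<noteq> 1" by simp
  have "sa / (4 * Fn1 * (P12 * (2 * y - 1))) * ((sa * P12) * (- 6 * y * (2 * y + 1) * (2 * y - 1)) * Fn1 / P)
     = (sa * sa) * (P12 * (- 6 * y * (2 * y + 1) * (2 * y - 1)) * Fn1 / (4 * Fn1 * (P12 * (2 * y - 1)) * P))"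
    by (simp add: field_simps)
  also have "\<dots> = P12 * (- 6 * y * (2 * y + 1) * (2 * y - 1)) * Fn1 / (4 * Fn1 * (P12 * (2 * y - 1)) * P)"
    using assms(1) by simp
  also have "\<dots> = - 3 / (2 * t * D)"
    unfolding P using y1 y2 assms(2,3,5,6)
    by (subst frac_eq_eq) (simp_all add: algebra_simps)
  finally show ?thesis .
qed

lemma alg4:
  fixes sa P12 Fn D t2 y P :: real
  assumes "sa * sa = 1" "P12 \<noteq> 0" "Fn \<noteq> 0" "D \<noteq> 0" "t2 \<noteq> 0" "y \<ge> 1"
    "P * (2 * y + 1) = D * (2 * t2) * y"
  shows "sa * (-2) / (4 * (y + 1/2) * Fn * (P12 * (2 * y - 1))) * ((sa * P12) * (4 * y^2 + 2 * (- y)) * Fn / P)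
    = - 1 / (t2 * D)"
proof -
  have y1: "2 * y - 1 \<noteq> 0" "2 * y + 1 \<noteq> 0" "y \<noteq> 0" "y + 1/2 \<noteq> 0" using assms(6) by auto
  have "y * (y * 4) \<ge> 4" using assms(6) mult_mono[of 1 y 4 "y*4"] by simp
  then have y2: "y * (y * 4) \<noteq> 1" by simp
  have P: "P = D * (2 * t2) * y / (2 * y + 1)" using assms(7) y1 by (simp add: field_simps)
  have "sa * (-2) / (4 * (y + 1/2) * Fn * (P12 * (2 * y - 1))) * ((sa * P12) * (4 * y^2 + 2 * (- y)) * Fn / P)
     = (sa * sa) * ((-2) * (P12 * (4 * y^2 + 2 * (- y)) * Fn) / (4 * (y + 1/2) * Fn * (P12 * (2 * y - 1)) * P))"
    by (simp only: times_divide_eq_left times_divide_eq_right divide_divide_eq_left mult_ac)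
  also have "\<dots> = (-2) * (P12 * (4 * y^2 + 2 * (- y)) * Fn) / (4 * (y + 1/2) * Fn * (P12 * (2 * y - 1)) * P)"
    using assms(1) by simp
  also have "\<dots> = - 1 / (t2 * D)"
    unfolding P using y1 y2 assms(2,3,4,5)
    by (subst frac_eq_eq) (simp_all add: field_simps power2_eq_square)
  finally show ?thesis .
qed

lemma dfact_pos: "dfact n > 0"
  by (induction n rule: dfact.induct) auto

lemma num_alpha: assumes n: "n \<ge> 1"
  shows "Ka n * (poly (pa n) (- real n) * fact (n+1) / (\<Prod>i\<le>n+1. real n + real i))
       = - 3 / (2 ^ (n + 1) * real (dfact (2 * n - 1)))"
proof -
  have QA: "Qa n (- real n) = - 6 * real n * (2 * real n + 1) * (2 * real n - 1)"
    unfolding Qa_def by (simp add: algebra_simps power2_eq_square power3_eq_cube)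
  have P32: "pochhammer (3/2::real) (n-1) = pochhammer (1/2) (n-1) * (2 * real n - 1)"
    using PH[OF n] by simp
  have t: "(2::real) ^ (n + 1) = 2 * 2 ^ n" by simp
  have Peq: "(\<Prod>i\<le>n+1. real n + real i) * fact (n-1)
     = (2 * real n + 1) * real (dfact (2*n-1)) * 2^n * (real n * fact (n-1))"
  proof -
    have "(\<Prod>i\<le>n+1. real n + real i) * fact (n-1) = fact (2*n+1)"
    proof -
      have e: "n + (n+1) = 2*n+1" by simp
      show ?thesis using PF[OF n, of "n+1"] unfolding e .
    qed
    also have "\<dots> = real (dfact (2*n+1)) * 2^n * fact n" by (rule D1)
    also have "fact n = (real n * fact (n-1) :: real)"
      using n by (rule factm)
    also have "real (dfact (2*n+1)) = (2 * real n + 1) * real (dfact (2*n-1))"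
      unfolding D2[OF n] by (simp add: algebra_simps)
    finally show ?thesis by (simp add: mult_ac)
  qed
  show ?thesis
    unfolding Ka_def poly_pa PM[OF n] QA P32 t
    by (rule alg3) (use Peq n sq_sign dfact_pos poch_pos[of "1/2::real" "n-1"] in auto)
qed

lemma num_z: assumes n: "n \<ge> 1"
  shows "Kz n * (poly (pz n) (- real n) * fact n / (\<Prod>i\<le>n. real n + real i))
       = - 1 / (2 ^ (n - 1) * real (dfact (2 * n + 1)))"
proof -
  have P32: "pochhammer (3/2::real) (n-1) = pochhammer (1/2) (n-1) * (2 * real n - 1)"
    using PH[OF n] by simp
  have t: "(2::real) ^ n = 2 * 2 ^ (n - 1)" using n by (cases n) auto
  have Peq: "(\<Prod>i\<le>n. real n + real i) * (2 * real n + 1)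
     = real (dfact (2*n+1)) * (2 * 2^(n-1)) * real n"
  proof -
    have a: "(\<Prod>i\<le>n. real n + real i) * fact (n-1) = fact (2*n)"
    proof -
      have e: "n + n = 2*n" by simp
      show ?thesis using PF[OF n, of n] unfolding e .
    qed
    have b: "(fact (2*n+1) :: real) = (2 * real n + 1) * fact (2*n)" by simp
    have c: "fact n = (real n * fact (n-1) :: real)"
      using n by (rule factm)
    have "(\<Prod>i\<le>n. real n + real i) * (2 * real n + 1) * fact (n-1)
        = ((\<Prod>i\<le>n. real n + real i) * fact (n-1)) * (2 * real n + 1)"
      by (simp only: mult_ac)
    also have "\<dots> = fact (2*n) * (2 * real n + 1)" unfolding a ..
    also have "\<dots> = fact (2*n+1)" unfolding b by (simp only: mult_ac)
    finally have "(\<Prod>i\<le>n. real n + real i) * (2 * real n + 1) * fact (n-1) = fact (2*n+1)" .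
    also have "\<dots> = real (dfact (2*n+1)) * 2^n * fact n" by (rule D1)
    finally have "(\<Prod>i\<le>n. real n + real i) * (2 * real n + 1) * fact (n-1)
      = (real (dfact (2*n+1)) * 2^n * real n) * fact (n-1)" unfolding c by (simp add: mult_ac)
    then show ?thesis unfolding t by simp
  qed
  show ?thesis
    unfolding Kz_def poly_pz PM[OF n] P32
    by (rule alg4) (use Peq n sq_sign dfact_pos poch_pos[of "1/2::real" "n-1"] in auto)
qed

theorem proposition5p2:
  shows "weight (pbar (alpha 0)) = 1/2 \<and>
    (\<forall>n::nat. n \<ge> 1 \<longrightarrow>
       weight (pbar (alpha n)) = - 3 / (2 ^ (n + 1) * real (dfact (2 * n - 1))) \<and>
       weight (pbar (Zp n)) = - 1 / (2 ^ (n - 1) * real (dfact (2 * n + 1))))"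
proof (intro conjI allI impI)
  have s: "{0..0+1} = {0::nat, 1}" by auto
  have b1: "bS 1 1 = 1"
  proof -
    have z: "(0::nat) choose 2 = 0" "(0::nat) choose 3 = 0" by simp_all
    show ?thesis using closed_form[of 0 1] by (simp add: BSc_def Ef_def Of_def z)
  qed
  have br: "brace (int 0) (int 1) = 1/2" unfolding BA by simp
  show "weight (pbar (alpha 0)) = 1/2"
    unfolding red_alpha s using b1 br by (simp add: bS0)
next
  fix n :: nat assume n: "n \<ge> 1"
  show "weight (pbar (alpha n)) = - 3 / (2 ^ (n + 1) * real (dfact (2 * n - 1)))"
    unfolding sum_alpha[OF n] num_alpha[OF n] ..
  show "weight (pbar (Zp n)) = - 1 / (2 ^ (n - 1) * real (dfact (2 * n + 1)))"
    unfolding sum_z[OF n] num_z[OF n] ..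
qed


end
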